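(* Assume the vector variational inequality defined by $F$ and $K$ is monotone. (i) If $\mathcal{A}$ and $\mathcal{B}$ are two different connected components of $\mathrm{Sol}^w(F,K)$, then $S^{-1}(\mathcal{A})\cap S^{-1}(\mathcal{B})=\emptyset$. (ii) If $\mathcal{A}$ and $\mathcal{B}$ are two different connected components of $\mathrm{Sol}^{pr}(F,K)$, then $\{\xi\in\operatorname{ri}\Delta: S(\xi)\cap\mathcal{A}\neq\emptyset\}\cap\{\xi\in\operatorname{ri}\Delta: S(\xi)\cap\mathcal{B}\neq\emptyset\}=\emptyset$.
   Context: Let $K\subset\mathbb{R}^n$ be a nonempty closed convex set and $F_1,\dots,F_m:K\to\mathbb{R}^n$ continuous functions; write $F=(F_1,\dots,F_m)$ and $F(x)(u)=(\langle F_1(x),u\rangle,\dots,\langle F_m(x),u\rangle)$. The problem is monotone if each $F_l$ is monotone on $K$: $\langle F_l(y)-F_l(x),y-x\rangle\ge0$ for all $x,y\in K$. Let $\Delta=\{\xi\in\mathbb{R}^m_+ : \sum_l\xi_l=1\}$, $\operatorname{ri}\Delta=\{\xi\in\Delta:\xi_l>0,\ l=1,\dots,m\}$, and $F_\xi=\sum_l\xi_lF_l$. For $G:K\to\mathbb{R}^n$, $\mathrm{Sol}(G,K)=\{x\in K:\langle G(x),y-x\rangle\ge0\ \forall y\in K\}$. The weak Pareto solution set $\mathrm{Sol}^w(F,K)$ is the set of $x\in K$ with $F(x)(x-y)\notin\operatorname{int}\mathbb{R}^m_+$ for all $y\in K$; it is known that $\mathrm{Sol}^w(F,K)=\bigcup_{\xi\in\Delta}\mathrm{Sol}(F_\xi,K)$.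 The proper Pareto solution set is $\mathrm{Sol}^{pr}(F,K)=\bigcup_{\xi\in\operatorname{ri}\Delta}\mathrm{Sol}(F_\xi,K)$. The basic multifunction is $S(\xi)=\mathrm{Sol}(F_\xi,K)$ for $\xi\in\Delta$, and $S^{-1}(\mathcal{A})=\{\xi\in\Delta:S(\xi)\cap\mathcal{A}\ne\emptyset\}$. *)

theory Defs
  imports "HOL-Analysis.Analysis"
begin

text \<open>Objectives are indexed by a finite type 'm (m = CARD('m)); vectors live in real^'n.\<close>

definition weight_simplex :: "('m::finite \<Rightarrow> real) set" where
  "weight_simplex = {\<xi>. (\<forall>l. 0 \<le> \<xi> l) \<and> (\<Sum>l\<in>UNIV. \<xi> l) = 1}"

definition ri_weight_simplex :: "('m::finite \<Rightarrow> real) set" where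
  "ri_weight_simplex = {\<xi>\<in>weight_simplex. \<forall>l. 0 < \<xi> l}"

definition VI_sol :: "(real^'n \<Rightarrow> real^'n) \<Rightarrow> (real^'n) set \<Rightarrow> (real^'n) set" where
  "VI_sol G K = {x\<in>K. \<forall>y\<in>K. inner (G x) (y - x) \<ge> 0}"

definition scal :: "('m::finite \<Rightarrow> real^'n \<Rightarrow> real^'n) \<Rightarrow> ('m \<Rightarrow> real) \<Rightarrow> real^'n \<Rightarrow> real^'n" where
  "scal F \<xi> x = (\<Sum>l\<in>UNIV. \<xi> l *\<^sub>R F l x)"

text \<open>Weak Pareto solutions: F(x)(x-y) not in int R^m_+ (i.e. not all components > 0).\<close>
definition weak_sol :: "('m::finite \<Rightarrow> real^'n \<Rightarrow> real^'n) \<Rightarrow> (real^'n) set \<Rightarrow> (real^'n) set" where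
  "weak_sol F K = {x\<in>K. \<forall>y\<in>K. \<not> (\<forall>l. inner (F l x) (x - y) > 0)}"

definition proper_sol :: "('m::finite \<Rightarrow> real^'n \<Rightarrow> real^'n) \<Rightarrow> (real^'n) set \<Rightarrow> (real^'n) set" where
  "proper_sol F K = (\<Union>\<xi>\<in>ri_weight_simplex. VI_sol (scal F \<xi>) K)"

definition basic_S :: "('m::finite \<Rightarrow> real^'n \<Rightarrow> real^'n) \<Rightarrow> (real^'n) set \<Rightarrow> ('m \<Rightarrow> real) \<Rightarrow> (real^'n) set" where
  "basic_S F K \<xi> = VI_sol (scal F \<xi>) K"

definition S_inv :: "('m::finite \<Rightarrow> real^'n \<Rightarrow> real^'n) \<Rightarrow> (real^'n) set \<Rightarrow> (real^'n) set \<Rightarrow> ('m \<Rightarrow> real) set" where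
  "S_inv F K A = {\<xi>\<in>weight_simplex. basic_S F K \<xi> \<inter> A \<noteq> {}}"

definition is_component :: "'a::topological_space set \<Rightarrow> 'a set \<Rightarrow> bool" where
  "is_component A X \<longleftrightarrow> (\<exists>x\<in>X. A = connected_component_set X x)"

definition monotone_on_set :: "(real^'n \<Rightarrow> real^'n) \<Rightarrow> (real^'n) set \<Rightarrow> bool" where
  "monotone_on_set G K \<longleftrightarrow> (\<forall>x\<in>K. \<forall>y\<in>K. inner (G y - G x) (y - x) \<ge> 0)"

end

theory Submission
  imports Defs
begin

lemma scal_cont:
  assumes "\<And>l. continuous_on K (F l)"
  shows "continuous_on K (scal F \<xi>)"
  unfolding scal_def[abs_def]
  by (intro continuous_intros assms)

lemma scal_mono:
  assumes "\<And>l. monotone_on_set (F l) K" "\<xi> \<in> weight_simplex" "x \<in> K" "y \<in> K"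
  shows "inner (scal F \<xi> y - scal F \<xi> x) (y - x) \<ge> 0"
proof -
  have "scal F \<xi> y - scal F \<xi> x = (\<Sum>l\<in>UNIV. \<xi> l *\<^sub>R (F l y - F l x))"
    by (simp add: scal_def sum_subtractf scaleR_right_diff_distrib)
  hence "inner (scal F \<xi> y - scal F \<xi> x) (y - x) = (\<Sum>l\<in>UNIV. \<xi> l * inner (F l y - F l x) (y - x))"
    by (simp add: inner_sum_left)
  also have "\<dots> \<ge> 0"
    using assms unfolding monotone_on_set_def weight_simplex_def
    by (intro sum_nonneg mult_nonneg_nonneg) auto
  finally show ?thesis .
qed

lemma minty:
  assumes "convex K" "continuous_on K G" "x \<in> K" "y \<in> K"
    and h: "\<forall>z\<in>K. inner (G z) (z - x) \<ge> 0"
  shows "inner (G x) (y - x) \<ge> 0"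
proof -
  define z where "z n = x + (1 / (real n + 1)) *\<^sub>R (y - x)" for n
  have zK: "z n \<in> K" for n
  proof -
    have "z n = (1 - 1 / (real n + 1)) *\<^sub>R x + (1 / (real n + 1)) *\<^sub>R y"
      by (simp add: z_def algebra_simps)
    moreover have "1 / (real n + 1) \<le> 1" by simp
    ultimately show ?thesis using assms(1,3,4) unfolding convex_alt
      by (metis (no_types) divide_nonneg_nonneg of_nat_0_le_iff zero_le_one add_nonneg_nonneg)
  qed
  have "(\<lambda>n. 1 / (real n + 1)) \<longlonglongrightarrow> 0"
    using LIMSEQ_inverse_real_of_nat by (simp add: inverse_eq_divide add.commute)
  hence "(\<lambda>n. (1 / (real n + 1)) *\<^sub>R (y - x)) \<longlonglongrightarrow> 0 *\<^sub>R (y - x)"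
    by (intro tendsto_intros)
  hence "(\<lambda>n. x + (1 / (real n + 1)) *\<^sub>R (y - x)) \<longlonglongrightarrow> x + 0"
    by (intro tendsto_intros) auto
  hence zl: "z \<longlonglongrightarrow> x" by (simp add: z_def[abs_def])
  have "(\<lambda>n. G (z n)) \<longlonglongrightarrow> G x"
    using assms(2) assms(3) zK zl continuous_on_sequentially[of K G] unfolding o_def by blast
  hence lim: "(\<lambda>n. inner (G (z n)) (y - x)) \<longlonglongrightarrow> inner (G x) (y - x)"
    by (intro tendsto_intros)
  have "inner (G (z n)) (y - x) \<ge> 0" for n
  proof -
    have "0 \<le> inner (G (z n)) (z n - x)" using h zK by blast
    also have "\<dots> = (1 / (real n + 1)) * inner (G (z n)) (y - x)"
      by (simp add: z_def)
    finally show ?thesis by (simp add: zero_le_divide_iff)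
  qed
  thus ?thesis using lim by (intro tendsto_lowerbound[OF lim]) auto
qed

lemma S_convex:
  assumes "convex K" "\<And>l. continuous_on K (F l)" "\<And>l. monotone_on_set (F l) K"
    "\<xi> \<in> weight_simplex"
  shows "convex (basic_S F K \<xi>)"
proof -
  let ?G = "scal F \<xi>"
  have eq: "basic_S F K \<xi> = K \<inter> (\<Inter>z\<in>K. {x. inner (?G z) (z - x) \<ge> 0})"
  proof (intro set_eqI iffI)
    fix x assume x: "x \<in> basic_S F K \<xi>"
    hence xK: "x \<in> K" and v: "\<forall>y\<in>K. inner (?G x) (y - x) \<ge> 0"
      by (auto simp: basic_S_def VI_sol_def)
    have "inner (?G z) (z - x) \<ge> 0" if "z \<in> K" for z
    proof -
      have "inner (?G z - ?G x) (z - x) \<ge> 0" using scal_mono[OF assms(3,4) xK that] .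
      moreover have "inner (?G x) (z - x) \<ge> 0" using v that by blast
      ultimately show ?thesis by (simp add: inner_diff_left)
    qed
    thus "x \<in> K \<inter> (\<Inter>z\<in>K. {x. inner (?G z) (z - x) \<ge> 0})" using xK by auto
  next
    fix x assume "x \<in> K \<inter> (\<Inter>z\<in>K. {x. inner (?G z) (z - x) \<ge> 0})"
    hence xK: "x \<in> K" and h: "\<forall>z\<in>K. inner (?G z) (z - x) \<ge> 0" by auto
    show "x \<in> basic_S F K \<xi>"
      using minty[OF assms(1) scal_cont[OF assms(2)] xK _ h] xK
      by (auto simp: basic_S_def VI_sol_def)
  qed
  have "convex {x. inner (?G z) (z - x) \<ge> 0}" for z
  proof -
    have "{x. inner (?G z) (z - x) \<ge> 0} = {x. inner (?G z) x \<le> inner (?G z) z}"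
      by (auto simp: inner_diff_right)
    thus ?thesis by (simp add: convex_halfspace_le)
  qed
  thus ?thesis unfolding eq by (intro convex_Int assms(1) convex_INT) auto
qed

lemma S_sub_weak:
  assumes "\<xi> \<in> weight_simplex"
  shows "basic_S F K \<xi> \<subseteq> weak_sol F K"
proof
  fix x assume "x \<in> basic_S F K \<xi>"
  hence xK: "x \<in> K" and v: "\<forall>y\<in>K. inner (scal F \<xi> x) (y - x) \<ge> 0"
    by (auto simp: basic_S_def VI_sol_def)
  have "\<not> (\<forall>l. inner (F l x) (x - y) > 0)" if yK: "y \<in> K" for y
  proof
    assume pos: "\<forall>l. inner (F l x) (x - y) > 0"
    have ne: "\<exists>l. \<xi> l \<noteq> 0"
    proof (rule ccontr)
      assume "\<not> ?thesis" hence "(\<Sum>l\<in>UNIV. \<xi> l) = 0" by simp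
      thus False using assms by (simp add: weight_simplex_def)
    qed
    then obtain l0 where l0: "\<xi> l0 \<noteq> 0" by blast
    have nn: "\<forall>l. 0 \<le> \<xi> l" using assms by (simp add: weight_simplex_def)
    have "inner (scal F \<xi> x) (x - y) = (\<Sum>l\<in>UNIV. \<xi> l * inner (F l x) (x - y))"
      by (simp add: scal_def inner_sum_left)
    also have "\<dots> > 0"
    proof (rule sum_pos2[where i=l0])
      show "0 < \<xi> l0 * inner (F l0 x) (x - y)" using l0 nn pos
        by (metis less_eq_real_def mult_pos_pos)
      show "\<And>i. i \<in> UNIV \<Longrightarrow> 0 \<le> \<xi> i * inner (F i x) (x - y)"
        using nn pos by (simp add: less_imp_le)
    qed auto
    finally have "inner (scal F \<xi> x) (y - x) < 0"
      by (metis inner_minus_right minus_diff_eq neg_less_0_iff_less)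
    thus False using v yK by force
  qed
  thus "x \<in> weak_sol F K" using xK by (auto simp: weak_sol_def)
qed

lemma comp_meet:
  assumes "is_component A X" "is_component B X" "connected C" "C \<subseteq> X"
    "a \<in> C \<inter> A" "b \<in> C \<inter> B"
  shows "A = B"
proof -
  obtain x where A: "A = connected_component_set X x" using assms(1) is_component_def by blast
  obtain y where B: "B = connected_component_set X y" using assms(2) is_component_def by blast
  have "A = connected_component_set X a" using A assms(5) connected_component_eq by blast
  moreover have "B = connected_component_set X b" using B assms(6) connected_component_eq by blast
  moreover have "b \<in> connected_component_set X a"
    using connected_component_maximal[of a C X] assms by blast
  ultimately show ?thesis using connected_component_eq by blast
qed

theorem proposition2:
  fixes F :: "'m::finite \<Rightarrow> real^'n \<Rightarrow> real^'n" and K :: "(real^'n) set"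
  assumes "K \<noteq> {}" and "closed K" and "convex K"
    and "\<And>l. continuous_on K (F l)"
    and "\<And>l. monotone_on_set (F l) K"
  shows "(\<forall>A B. is_component A (weak_sol F K) \<and> is_component B (weak_sol F K) \<and> A \<noteq> B
              \<longrightarrow> S_inv F K A \<inter> S_inv F K B = {})
       \<and> (\<forall>A B. is_component A (proper_sol F K) \<and> is_component B (proper_sol F K) \<and> A \<noteq> B
              \<longrightarrow> {\<xi>\<in>ri_weight_simplex. basic_S F K \<xi> \<inter> A \<noteq> {}}
                  \<inter> {\<xi>\<in>ri_weight_simplex. basic_S F K \<xi> \<inter> B \<noteq> {}} = {})"
proof (intro conjI allI impI)
  fix A B assume h: "is_component A (weak_sol F K) \<and> is_component B (weak_sol F K) \<and> A \<noteq> B"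
  show "S_inv F K A \<inter> S_inv F K B = {}"
  proof (rule ccontr)
    assume "S_inv F K A \<inter> S_inv F K B \<noteq> {}"
    then obtain \<xi> where x1: "\<xi> \<in> S_inv F K A" and x2: "\<xi> \<in> S_inv F K B" by blast
    have xi: "\<xi> \<in> weight_simplex" using x1 unfolding S_inv_def by blast
    obtain a where a: "a \<in> basic_S F K \<xi> \<inter> A" using x1 unfolding S_inv_def by blast
    obtain b where b: "b \<in> basic_S F K \<xi> \<inter> B" using x2 unfolding S_inv_def by blast
    have c: "connected (basic_S F K \<xi>)"
      by (rule convex_connected[OF S_convex[OF assms(3,4,5) xi]])
    have h1: "is_component A (weak_sol F K)" and h2: "is_component B (weak_sol F K)" using h by auto
    have "A = B" by (rule comp_meet[OF h1 h2 c S_sub_weak[OF xi] a b])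
    thus False using h by blast
  qed
next
  fix A B assume h: "is_component A (proper_sol F K) \<and> is_component B (proper_sol F K) \<and> A \<noteq> B"
  show "{\<xi>\<in>ri_weight_simplex. basic_S F K \<xi> \<inter> A \<noteq> {}}
                  \<inter> {\<xi>\<in>ri_weight_simplex. basic_S F K \<xi> \<inter> B \<noteq> {}} = {}"
  proof (rule ccontr)
    assume "\<not> ?thesis"
    then obtain \<xi> where x1: "\<xi> \<in> {\<xi>\<in>ri_weight_simplex. basic_S F K \<xi> \<inter> A \<noteq> {}}"
       and x2: "\<xi> \<in> {\<xi>\<in>ri_weight_simplex. basic_S F K \<xi> \<inter> B \<noteq> {}}" by blast
    have xi: "\<xi> \<in> ri_weight_simplex" using x1 by blast
    obtain a where a: "a \<in> basic_S F K \<xi> \<inter> A" using x1 by blast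
    obtain b where b: "b \<in> basic_S F K \<xi> \<inter> B" using x2 by blast
    have xi': "\<xi> \<in> weight_simplex" using xi by (simp add: ri_weight_simplex_def)
    have sub: "basic_S F K \<xi> \<subseteq> proper_sol F K"
      using xi unfolding proper_sol_def basic_S_def by blast
    have c: "connected (basic_S F K \<xi>)"
      by (rule convex_connected[OF S_convex[OF assms(3,4,5) xi']])
    have h1: "is_component A (proper_sol F K)" and h2: "is_component B (proper_sol F K)" using h by auto
    have "A = B" by (rule comp_meet[OF h1 h2 c sub a b])
    thus False using h by blast
  qed
qed

end
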